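(* Let $\mathbf{E},\mathbf{Y}$ be Euclidean spaces, $\mathcal{X}\subset\mathbf{E}$ nonempty closed convex, $h\colon\mathbf{Y}\to\mathbb{R}$ convex, $F\colon\mathbf{E}\to\mathbf{Y}$ continuously differentiable, $f=h\circ F$, $f_x(y)=h(F(x)+\nabla F(x)(y-x))$. Assume $\mathcal{X}^*=\operatorname{argmin}_{\mathcal{X}}f\neq\emptyset$, that $f(x)-\min_{\mathcal{X}}f\ge\mu\,\mathrm{dist}(x,\mathcal{X}^* )$ for all $x\in\mathcal{X}$ for some $\mu>0$, and that for some reals $a>0$, $b\ge0$, $$|f(y)-f_x(y)|\le a\|y-x\|^2+b\|y-x\|\quad\forall x,y\in\mathcal{X}.$$ Let $x_0\in\mathcal{X}$ and let $x_{k+1}$ be any minimizer of $x\mapsto f_{x_k}(x)+a\|x-x_k\|^2+b\|x-x_k\|$ over $\mathcal{X}$. If $\mathrm{dist}(x_0,\mathcal{X}^* )\le\frac{\mu-2b}{2a}$, then for all $k\ge0$, $$\mathrm{dist}(x_{k+1},\mathcal{X}^* )\le\frac{2\big(b+a\,\mathrm{dist}(x_k,\mathcal{X}^* )\big)}{\mu}\,\mathrm{dist}(x_k,\mathcal{X}^* ).$$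
   Context: $\|\cdot\|$ is the Euclidean norm on $\mathbf{E}$, $\mathrm{dist}$ the Euclidean distance, and $\nabla F(x)$ the Jacobian of $F$ at $x$. *)

theory Defs
  imports "HOL-Analysis.Analysis"
begin

definition lin_model :: "('y \<Rightarrow> real) \<Rightarrow> ('e::real_normed_vector \<Rightarrow> 'y::real_normed_vector)
    \<Rightarrow> ('e \<Rightarrow> ('e \<Rightarrow>\<^sub>L 'y)) \<Rightarrow> 'e \<Rightarrow> 'e \<Rightarrow> real" where
  "lin_model h F DF x y = h (F x + blinfun_apply (DF x) (y - x))"

definition argmin_on :: "('e \<Rightarrow> real) \<Rightarrow> 'e set \<Rightarrow> 'e set" where
  "argmin_on g X = {x \<in> X. \<forall>y\<in>X. g x \<le> g y}"

end

theory Submission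
  imports Defs
begin

theorem lemma7p4:
  fixes X :: "'e::euclidean_space set"
    and h :: "'y::euclidean_space \<Rightarrow> real"
    and F :: "'e \<Rightarrow> 'y"
    and DF :: "'e \<Rightarrow> ('e \<Rightarrow>\<^sub>L 'y)"
    and \<mu> a b :: real
    and x :: "nat \<Rightarrow> 'e"
  assumes X_ne: "X \<noteq> {}" and X_closed: "closed X" and X_convex: "convex X"
    and h_convex: "convex_on UNIV h"
    and F_deriv: "\<And>z. (F has_derivative blinfun_apply (DF z)) (at z)"
    and DF_cont: "continuous_on UNIV DF"
    and Xs_ne: "argmin_on (h \<circ> F) X \<noteq> {}"
    and \<mu>_pos: "\<mu> > 0"
    and sharp: "\<And>z xs. z \<in> X \<Longrightarrow> xs \<in> argmin_on (h \<circ> F) X \<Longrightarrow>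
        (h \<circ> F) z - (h \<circ> F) xs \<ge> \<mu> * infdist z (argmin_on (h \<circ> F) X)"
    and a_pos: "a > 0" and b_nonneg: "b \<ge> 0"
    and approx: "\<And>z y. z \<in> X \<Longrightarrow> y \<in> X \<Longrightarrow>
        \<bar>(h \<circ> F) y - lin_model h F DF z y\<bar> \<le> a * (norm (y - z))\<^sup>2 + b * norm (y - z)"
    and x0: "x 0 \<in> X"
    and step: "\<And>k. x (Suc k) \<in> argmin_on
        (\<lambda>z. lin_model h F DF (x k) z + a * (norm (z - x k))\<^sup>2 + b * norm (z - x k)) X"
    and init: "infdist (x 0) (argmin_on (h \<circ> F) X) \<le> (\<mu> - 2 * b) / (2 * a)"
  shows "\<forall>k. infdist (x (Suc k)) (argmin_on (h \<circ> F) X)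
      \<le> 2 * (b + a * infdist (x k) (argmin_on (h \<circ> F) X)) / \<mu> * infdist (x k) (argmin_on (h \<circ> F) X)"
proof
  fix k
  let ?f = "h \<circ> F"
  let ?S = "argmin_on ?f X"
  have cf: "continuous_on UNIV ?f"
  proof -
    have "continuous_on UNIV h" using convex_on_continuous[OF open_UNIV h_convex] .
    moreover have "continuous_on UNIV F"
      using F_deriv has_derivative_continuous continuous_at_imp_continuous_on by blast
    ultimately show ?thesis using continuous_on_compose by (metis continuous_on_subset subset_UNIV)
  qed
  have "?S = X \<inter> (\<Inter>y\<in>X. {z. ?f z \<le> (\<lambda>_. ?f y) z})"
    unfolding argmin_on_def by auto
  moreover have "closed (X \<inter> (\<Inter>y\<in>X. {z. ?f z \<le> (\<lambda>_. ?f y) z}))"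
    using X_closed cf by (intro closed_Int closed_INT ballI closed_Collect_le) auto
  ultimately have Sc: "closed ?S" by simp
  have xX: "x j \<in> X" for j
    using x0 step unfolding argmin_on_def by (cases j) auto
  obtain xs where xs: "xs \<in> ?S" "infdist (x k) ?S = dist (x k) xs"
    using infdist_attains_inf[OF Sc Xs_ne] by blast
  define d where "d = infdist (x k) ?S"
  have d0: "d \<ge> 0" unfolding d_def by (rule infdist_nonneg)
  have dn: "norm (xs - x k) = d" using xs(2) unfolding d_def by (simp add: dist_norm norm_minus_commute)
  have xsX: "xs \<in> X" using xs(1) unfolding argmin_on_def by auto
  let ?m = "\<lambda>z. lin_model h F DF (x k) z + a * (norm (z - x k))\<^sup>2 + b * norm (z - x k)"
  have "?m (x (Suc k)) \<le> ?m xs" using step[of k] xsX unfolding argmin_on_def by auto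
  moreover have "?f (x (Suc k)) \<le> ?m (x (Suc k))"
    using approx[of "x k" "x (Suc k)", OF xX xX] by (simp add: abs_le_iff)
  moreover have "lin_model h F DF (x k) xs \<le> ?f xs + a * d\<^sup>2 + b * d"
    using approx[OF xX xsX, of k] dn by (simp add: abs_le_iff)
  ultimately have "?f (x (Suc k)) - ?f xs \<le> 2 * (b + a * d) * d"
    using dn by (simp add: power2_eq_square algebra_simps)
  moreover have "?f (x (Suc k)) - ?f xs \<ge> \<mu> * infdist (x (Suc k)) ?S"
    using sharp[OF xX xs(1)] .
  ultimately have "\<mu> * infdist (x (Suc k)) ?S \<le> 2 * (b + a * d) * d" by linarith
  hence "infdist (x (Suc k)) ?S \<le> 2 * (b + a * d) * d / \<mu>"
    using \<mu>_pos by (simp add: field_simps)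
  thus "infdist (x (Suc k)) ?S \<le> 2 * (b + a * infdist (x k) ?S) / \<mu> * infdist (x k) ?S"
    unfolding d_def by simp
qed

end
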